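(* Let $k\geq 1$ be a fixed integer, $p=\frac{\log n+(k+1)\log\log n-\log\log\log n}{n}$, $G=G(n,p)$ and $D=\frac{\log n}{\log\log n}$. Call a vertex $v$ small if $d_G(v)<\frac{\log n}{100}$. Then almost surely there do not exist two distinct small vertices of $G$ at distance at most $\frac{3}{4}D$ in $G$.
   Context: $\log$ is the natural logarithm; $G(n,p)$ is the binomial random graph on $n$ vertices, $n\to\infty$; "almost surely" means with probability tending to $1$; $d_G(v)$ is the degree of $v$ in $G$. *)

theory Defs
  imports Complex_Main
begin

text \<open>Simple graphs on the vertex set {0..<n}: an edge set is a set of 2-element subsets.\<close>

definition all_edges :: "nat \<Rightarrow> nat set set" where
  "all_edges n = {{i, j} | i j. i < n \<and> j < n \<and> i \<noteq> j}"

text \<open>Probability that the binomial random graph G(n,p) has property P: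
  each of the n choose 2 possible edges is present independently with probability p.\<close>

definition gnp_prob :: "nat \<Rightarrow> real \<Rightarrow> (nat set set \<Rightarrow> bool) \<Rightarrow> real" where
  "gnp_prob n p P =
     (\<Sum>E \<in> {E. E \<subseteq> all_edges n \<and> P E}.
        p ^ card E * (1 - p) ^ (card (all_edges n) - card E))"

definition degree :: "nat set set \<Rightarrow> nat \<Rightarrow> nat" where
  "degree E v = card {u. {u, v} \<in> E}"

definition is_walk :: "nat set set \<Rightarrow> nat list \<Rightarrow> bool" where
  "is_walk E xs \<longleftrightarrow> xs \<noteq> [] \<and> (\<forall>i. Suc i < length xs \<longrightarrow> {xs ! i, xs ! Suc i} \<in> E)"

definition dist_at_most :: "nat set set \<Rightarrow> nat \<Rightarrow> nat \<Rightarrow> real \<Rightarrow> bool" where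
  "dist_at_most E u v L \<longleftrightarrow>
     (\<exists>xs. is_walk E xs \<and> hd xs = u \<and> last xs = v \<and> real (length xs - 1) \<le> L)"

end

theory Submission
  imports Defs "HOL-Real_Asymp.Real_Asymp"
begin


lemma finite_all_edges: "finite (all_edges n)"
proof -
  have "all_edges n \<subseteq> Pow {..<n}" unfolding all_edges_def by auto
  thus ?thesis by (rule finite_subset) simp
qed

lemma total_mass:
  fixes p :: real
  assumes "finite A"
  shows "(\<Sum>E\<in>Pow A. p ^ card E * (1 - p) ^ (card A - card E)) = 1"
proof -
  have "(\<Prod>x\<in>A. p + (1 - p)) = (\<Sum>X\<in>Pow A. (\<Prod>x\<in>X. p) * (\<Prod>x\<in>A-X. 1 - p))"
    by (rule prod_add[OF assms])
  also have "\<dots> = (\<Sum>E\<in>Pow A. p ^ card E * (1 - p) ^ (card A - card E))"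
  proof (intro sum.cong refl)
    fix X assume X: "X \<in> Pow A"
    hence fX: "finite X" using assms finite_subset by auto
    show "(\<Prod>x\<in>X. p) * (\<Prod>x\<in>A-X. 1 - p) = p ^ card X * (1 - p) ^ (card A - card X)"
      using X fX by (simp add: card_Diff_subset)
  qed
  finally show ?thesis by simp
qed

lemma gen_bound:
  fixes p c :: real
  assumes A: "finite A" and FA: "F \<subseteq> A" and BA: "B \<subseteq> A" and FB: "F \<inter> B = {}"
  shows "(\<Sum>E\<in>Pow A. if F \<subseteq> E then c ^ card (E \<inter> B) * (p ^ card E * (1 - p) ^ (card A - card E)) else 0)
         = p ^ card F * (c * p + 1 - p) ^ card B"
proof -
  define f1 where "f1 = (\<lambda>e. p * (if e \<in> B then c else 1))"
  define f2 where "f2 = (\<lambda>e. if e \<in> F then 0 else 1 - p)"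
  have "(\<Prod>x\<in>A. f1 x + f2 x) = (\<Sum>X\<in>Pow A. (\<Prod>x\<in>X. f1 x) * (\<Prod>x\<in>A-X. f2 x))"
    by (rule prod_add[OF A])
  also have "\<dots> = (\<Sum>E\<in>Pow A. if F \<subseteq> E then c ^ card (E \<inter> B) * (p ^ card E * (1 - p) ^ (card A - card E)) else 0)"
  proof (intro sum.cong refl)
    fix X assume X: "X \<in> Pow A"
    hence fX: "finite X" using A finite_subset by auto
    have 1: "(\<Prod>x\<in>X. f1 x) = p ^ card X * c ^ card (X \<inter> B)"
    proof -
      have "(\<Prod>x\<in>X. f1 x) = (\<Prod>x\<in>X. p) * (\<Prod>x\<in>X. if x \<in> B then c else 1)"
        unfolding f1_def by (rule prod.distrib)
      also have "(\<Prod>x\<in>X. if x \<in> B then c else 1) = (\<Prod>x\<in>X \<inter> B. c)"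
        using prod.inter_restrict[OF fX, of "\<lambda>_. c" B] by simp
      finally show ?thesis by simp
    qed
    show "(\<Prod>x\<in>X. f1 x) * (\<Prod>x\<in>A-X. f2 x) = (if F \<subseteq> X then c ^ card (X \<inter> B) * (p ^ card X * (1 - p) ^ (card A - card X)) else 0)"
    proof (cases "F \<subseteq> X")
      case True
      have "(\<Prod>x\<in>A-X. f2 x) = (\<Prod>x\<in>A-X. 1 - p)"
        using True unfolding f2_def by (intro prod.cong) auto
      also have "\<dots> = (1 - p) ^ (card A - card X)" using X fX by (simp add: card_Diff_subset)
      finally show ?thesis using True 1 by simp
    next
      case False
      then obtain x where "x \<in> F" "x \<notin> X" by auto
      hence "(\<Prod>x\<in>A-X. f2 x) = 0" using FA A unfolding f2_def
        by (intro prod_zero) auto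
      thus ?thesis using False by simp
    qed
  qed
  also have "(\<Prod>x\<in>A. f1 x + f2 x) = (\<Prod>x\<in>A. (if x \<in> F then p else 1) * (if x \<in> B then c * p + 1 - p else 1))"
    using FB unfolding f1_def f2_def by (intro prod.cong) auto
  also have "\<dots> = (\<Prod>x\<in>A. if x \<in> F then p else 1) * (\<Prod>x\<in>A. if x \<in> B then c * p + 1 - p else 1)"
    by (rule prod.distrib)
  also have "(\<Prod>x\<in>A. if x \<in> F then p else 1) = (\<Prod>x\<in>A \<inter> F. p)"
    using prod.inter_restrict[OF A, of "\<lambda>_. p" F] by simp
  also have "(\<Prod>x\<in>A. if x \<in> B then c * p + 1 - p else 1) = (\<Prod>x\<in>A \<inter> B. c * p + 1 - p)"
    using prod.inter_restrict[OF A, of "\<lambda>_. c * p + 1 - p" B] by simp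
  finally show ?thesis using FA BA by (simp add: Int_absorb1)
qed

lemma union_bound:
  fixes w :: "'a set \<Rightarrow> real"
  assumes A: "finite A" and I: "finite I" and w: "\<And>E. E \<subseteq> A \<Longrightarrow> 0 \<le> w E"
    and cov: "\<And>E. E \<subseteq> A \<Longrightarrow> P E \<Longrightarrow> \<exists>i\<in>I. Q i E"
  shows "(\<Sum>E\<in>{E. E \<subseteq> A \<and> P E}. w E) \<le> (\<Sum>i\<in>I. \<Sum>E\<in>{E. E \<subseteq> A \<and> Q i E}. w E)"
proof -
  have eq: "\<And>R. (\<Sum>E\<in>{E. E \<subseteq> A \<and> R E}. w E) = (\<Sum>E\<in>Pow A. if R E then w E else 0)"
  proof -
    fix R :: "'a set \<Rightarrow> bool"
    have 1: "{E. E \<subseteq> A \<and> R E} = {E \<in> Pow A. R E}" by auto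
    have "sum w {E \<in> Pow A. R E} = (\<Sum>E\<in>Pow A. if R E then w E else 0)"
      by (rule sum.inter_filter) (simp add: A)
    thus "(\<Sum>E\<in>{E. E \<subseteq> A \<and> R E}. w E) = (\<Sum>E\<in>Pow A. if R E then w E else 0)"
      by (simp only: 1)
  qed
  have "(\<Sum>E\<in>Pow A. if P E then w E else 0) \<le> (\<Sum>E\<in>Pow A. \<Sum>i\<in>I. if Q i E then w E else 0)"
  proof (rule sum_mono)
    fix E assume E: "E \<in> Pow A"
    show "(if P E then w E else 0) \<le> (\<Sum>i\<in>I. if Q i E then w E else 0)"
    proof (cases "P E")
      case True
      then obtain i where i: "i \<in> I" "Q i E" using cov E by auto
      have "w E = (if Q i E then w E else 0)" using i by simp
      also have "\<dots> \<le> (\<Sum>i\<in>I. if Q i E then w E else 0)"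
        by (rule member_le_sum[OF i(1)]) (use w E I in auto)
      finally show ?thesis using True by simp
    next
      case False
      thus ?thesis using w E by (auto intro: sum_nonneg)
    qed
  qed
  also have "\<dots> = (\<Sum>i\<in>I. \<Sum>E\<in>Pow A. if Q i E then w E else 0)" by (rule sum.swap)
  finally show ?thesis by (simp add: eq)
qed

lemma one_le_powr_neg:
  fixes c y :: real
  assumes "0 < c" "c \<le> 1" "y \<le> 0"
  shows "1 \<le> c powr y"
proof -
  have "ln c \<le> 0" using assms by simp
  hence "0 \<le> y * ln c" using assms by (simp add: mult_nonpos_nonpos)
  thus ?thesis using assms by (simp add: powr_def)
qed

lemma event_bound:
  fixes p c t :: real
  assumes A: "finite A" and FA: "F \<subseteq> A" and B1A: "B1 \<subseteq> A" and B2A: "B2 \<subseteq> A"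
    and FB: "F \<inter> (B1 \<union> B2) = {}" and B12: "B1 \<inter> B2 = {}"
    and p: "0 \<le> p" "p \<le> 1" and c: "0 < c" "c \<le> 1"
    and ev: "\<And>E. E \<subseteq> A \<Longrightarrow> Q E \<Longrightarrow> F \<subseteq> E \<and> real (card (E \<inter> B1)) < t \<and> real (card (E \<inter> B2)) < t"
  shows "(\<Sum>E\<in>{E. E \<subseteq> A \<and> Q E}. p ^ card E * (1 - p) ^ (card A - card E))
     \<le> c powr (-2*t) * (p ^ card F * (c * p + 1 - p) ^ (card B1 + card B2))"
proof -
  define B where "B = B1 \<union> B2"
  have fB1: "finite B1" and fB2: "finite B2" using A B1A B2A finite_subset by auto
  have cardB: "card B = card B1 + card B2" unfolding B_def using fB1 fB2 B12 by (rule card_Un_disjoint)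
  have 1: "{E. E \<subseteq> A \<and> Q E} = {E \<in> Pow A. Q E}" by auto
  have "(\<Sum>E\<in>{E \<in> Pow A. Q E}. p ^ card E * (1 - p) ^ (card A - card E))
      = (\<Sum>E\<in>Pow A. if Q E then p ^ card E * (1 - p) ^ (card A - card E) else 0)"
    by (rule sum.inter_filter) (simp add: A)
  hence "(\<Sum>E\<in>{E. E \<subseteq> A \<and> Q E}. p ^ card E * (1 - p) ^ (card A - card E))
      = (\<Sum>E\<in>Pow A. if Q E then p ^ card E * (1 - p) ^ (card A - card E) else 0)"
    by (simp only: 1)
  also have "\<dots> \<le> (\<Sum>E\<in>Pow A. c powr (-2*t) * (if F \<subseteq> E then c ^ card (E \<inter> B) * (p ^ card E * (1 - p) ^ (card A - card E)) else 0))"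
  proof (rule sum_mono)
    fix E assume E: "E \<in> Pow A"
    have W: "0 \<le> p ^ card E * (1 - p) ^ (card A - card E)" using p by simp
    show "(if Q E then p ^ card E * (1 - p) ^ (card A - card E) else 0)
          \<le> c powr (-2*t) * (if F \<subseteq> E then c ^ card (E \<inter> B) * (p ^ card E * (1 - p) ^ (card A - card E)) else 0)"
    proof (cases "Q E")
      case True
      with ev E have e: "F \<subseteq> E" "real (card (E \<inter> B1)) < t" "real (card (E \<inter> B2)) < t" by auto
      have fE: "finite E" using E A finite_subset by auto
      have "E \<inter> B = (E \<inter> B1) \<union> (E \<inter> B2)" unfolding B_def by auto
      moreover have "card ((E \<inter> B1) \<union> (E \<inter> B2)) = card (E \<inter> B1) + card (E \<inter> B2)"
        by (rule card_Un_disjoint) (use fE B12 in auto)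
      ultimately have cEB: "card (E \<inter> B) = card (E \<inter> B1) + card (E \<inter> B2)" by simp
      have "1 \<le> c powr (real (card (E \<inter> B)) - 2 * t)"
        using c e cEB by (intro one_le_powr_neg) auto
      also have "\<dots> = c powr (real (card (E \<inter> B))) * c powr (-2*t)"
        by (subst powr_add[symmetric]) simp
      also have "c powr (real (card (E \<inter> B))) = c ^ card (E \<inter> B)"
        using c by (simp add: powr_realpow)
      finally have 1: "1 \<le> c powr (-2*t) * c ^ card (E \<inter> B)" by (simp add: mult.commute)
      have "p ^ card E * (1 - p) ^ (card A - card E) \<le> (c powr (-2*t) * c ^ card (E \<inter> B)) * (p ^ card E * (1 - p) ^ (card A - card E))"
        using mult_right_mono[OF 1 W] by simp
      thus ?thesis using True e by (simp add: mult.assoc)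
    next
      case False
      have "0 \<le> c ^ card (E \<inter> B) * (p ^ card E * (1 - p) ^ (card A - card E))" using W c by simp
      thus ?thesis using False c by simp
    qed
  qed
  also have "\<dots> = c powr (-2*t) * (\<Sum>E\<in>Pow A. if F \<subseteq> E then c ^ card (E \<inter> B) * (p ^ card E * (1 - p) ^ (card A - card E)) else 0)"
    by (simp add: sum_distrib_left)
  also have "(\<Sum>E\<in>Pow A. if F \<subseteq> E then c ^ card (E \<inter> B) * (p ^ card E * (1 - p) ^ (card A - card E)) else 0)
     = p ^ card F * (c * p + 1 - p) ^ card B"
    by (rule gen_bound[OF A FA]) (use B1A B2A FB in \<open>auto simp: B_def\<close>)
  finally show ?thesis by (simp add: cardB)
qed



lemma is_walk_shorten:
  assumes w: "is_walk E xs" and ij: "i < j" "j < length xs" and eq: "xs ! i = xs ! j"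
  defines "ys \<equiv> take i xs @ drop j xs"
  shows "is_walk E ys" "hd ys = hd xs" "last ys = last xs" "length ys < length xs" "set ys \<subseteq> set xs"
proof -
  have len: "length ys = i + (length xs - j)" unfolding ys_def using ij by simp
  have nth: "ys ! m = xs ! (if m < i then m else m + (j - i))" if "m < length ys" for m
    using that ij unfolding ys_def len by (auto simp: nth_append intro!: arg_cong[where f="nth xs"])
  have ne: "ys \<noteq> []" using len ij by auto
  show "is_walk E ys" unfolding is_walk_def
  proof (intro conjI allI impI ne)
    fix m assume m: "Suc m < length ys"
    have "{ys ! m, ys ! Suc m} = {xs ! (if m < i then m else m + (j - i)), xs ! Suc (if m < i then m else m + (j - i))}"
    proof (cases "Suc m < i")
      case True thus ?thesis using nth[of m] nth[of "Suc m"] m by simp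
    next
      case False
      show ?thesis
      proof (cases "Suc m = i")
        case True
        thus ?thesis using nth[of m] nth[of "Suc m"] m eq ij by simp
      next
        case False
        hence "\<not> m < i" using \<open>\<not> Suc m < i\<close> by simp
        thus ?thesis using nth[of m] nth[of "Suc m"] m \<open>\<not> Suc m < i\<close> ij by simp
      qed
    qed
    moreover have "Suc (if m < i then m else m + (j - i)) < length xs" using m len ij by auto
    ultimately show "{ys ! m, ys ! Suc m} \<in> E" using w unfolding is_walk_def by simp
  qed
  show "hd ys = hd xs"
  proof -
    have "hd ys = ys ! 0" using ne by (simp add: hd_conv_nth)
    also have "\<dots> = xs ! (if 0 < i then 0 else j)" using nth[of 0] ne by simp
    also have "\<dots> = xs ! 0" using eq by auto
    also have "\<dots> = hd xs" using ij by (subst hd_conv_nth) auto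
    finally show ?thesis .
  qed
  show "last ys = last xs"
  proof -
    have "last ys = ys ! (length ys - 1)" using ne by (simp add: last_conv_nth)
    also have "\<dots> = xs ! (length xs - 1)" using nth[of "length ys - 1"] ne len ij by simp
    also have "\<dots> = last xs" using ij by (subst last_conv_nth) auto
    finally show ?thesis .
  qed
  show "length ys < length xs" using len ij by simp
  show "set ys \<subseteq> set xs" unfolding ys_def using set_take_subset set_drop_subset by fastforce
qed

lemma walk_to_path:
  assumes "is_walk E xs"
  shows "\<exists>ys. is_walk E ys \<and> distinct ys \<and> hd ys = hd xs \<and> last ys = last xs \<and> length ys \<le> length xs"
  using assms
proof (induction "length xs" arbitrary: xs rule: less_induct)
  case less
  show ?case
  proof (cases "distinct xs")
    case True thus ?thesis using less.prems by blast
  next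
    case False
    then obtain a b where ab: "a < length xs" "b < length xs" "a \<noteq> b" "xs ! a = xs ! b"
      unfolding distinct_conv_nth by blast
    define i where "i = min a b"
    define j where "j = max a b"
    have ij: "i < j" "j < length xs" "xs ! i = xs ! j" using ab unfolding i_def j_def
      by (auto simp: min_def max_def)
    define ys where "ys = take i xs @ drop j xs"
    note s = is_walk_shorten[OF less.prems ij, folded ys_def]
    from less.hyps[OF s(4) s(1)] obtain zs where
      "is_walk E zs \<and> distinct zs \<and> hd zs = hd ys \<and> last zs = last ys \<and> length zs \<le> length ys" by blast
    moreover have "length ys \<le> length xs" using s(4) by simp
    ultimately show ?thesis using s(2,3) by (intro exI[of _ zs]) auto
  qed
qed



definition pedges :: "nat list \<Rightarrow> nat set set" where
  "pedges xs = (\<lambda>i. {xs ! i, xs ! Suc i}) ` {i. Suc i < length xs}"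

definition nbr :: "nat \<Rightarrow> nat list \<Rightarrow> nat \<Rightarrow> nat set set" where
  "nbr n xs u = (\<lambda>w. {u, w}) ` {w. w < n \<and> w \<notin> set xs}"

definition Ev :: "nat \<Rightarrow> real \<Rightarrow> nat list \<Rightarrow> nat set set \<Rightarrow> bool" where
  "Ev n t xs E \<longleftrightarrow> distinct xs \<and> pedges xs \<subseteq> E \<and> real (card (E \<inter> nbr n xs (hd xs))) < t
      \<and> real (card (E \<inter> nbr n xs (last xs))) < t"

lemma all_edges_lt: "e \<in> all_edges n \<Longrightarrow> x \<in> e \<Longrightarrow> x < n"
  unfolding all_edges_def by auto

lemma doubleton_in_all_edges: "a < n \<Longrightarrow> b < n \<Longrightarrow> a \<noteq> b \<Longrightarrow> {a, b} \<in> all_edges n"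
  unfolding all_edges_def by auto

lemma pedges_sub:
  assumes "distinct xs" "set xs \<subseteq> {..<n}"
  shows "pedges xs \<subseteq> all_edges n"
proof
  fix e assume "e \<in> pedges xs"
  then obtain i where i: "Suc i < length xs" "e = {xs ! i, xs ! Suc i}" unfolding pedges_def by auto
  have "xs ! i \<in> set xs" "xs ! Suc i \<in> set xs" using i(1) by (auto intro!: nth_mem)
  hence "xs ! i < n" "xs ! Suc i < n" using assms(2) by auto
  moreover have "xs ! i \<noteq> xs ! Suc i" using assms(1) i(1) by (simp add: nth_eq_iff_index_eq)
  ultimately show "e \<in> all_edges n" using i(2) doubleton_in_all_edges by simp
qed

lemma nbr_sub:
  assumes "u \<in> set xs" "set xs \<subseteq> {..<n}"
  shows "nbr n xs u \<subseteq> all_edges n"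
  using assms unfolding nbr_def by (auto intro!: doubleton_in_all_edges)

lemma card_nbr:
  assumes "distinct xs" "set xs \<subseteq> {..<n}"
  shows "card (nbr n xs u) = n - length xs"
proof -
  have "inj_on (\<lambda>w. {u, w}) {w. w < n \<and> w \<notin> set xs}"
    by (auto simp: inj_on_def doubleton_eq_iff)
  hence "card (nbr n xs u) = card {w. w < n \<and> w \<notin> set xs}" unfolding nbr_def by (rule card_image)
  also have "{w. w < n \<and> w \<notin> set xs} = {..<n} - set xs" by auto
  also have "card \<dots> = n - card (set xs)" using assms by (simp add: card_Diff_subset)
  also have "card (set xs) = length xs" using assms by (simp add: distinct_card)
  finally show ?thesis .
qed

lemma card_pedges:
  assumes "distinct xs"
  shows "card (pedges xs) = length xs - 1"
proof -
  have "inj_on (\<lambda>i. {xs ! i, xs ! Suc i}) {i. Suc i < length xs}"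
  proof (rule inj_onI)
    fix i j assume i: "i \<in> {i. Suc i < length xs}" and j: "j \<in> {i. Suc i < length xs}"
      and e: "{xs ! i, xs ! Suc i} = {xs ! j, xs ! Suc j}"
    have ii: "i < length xs" "Suc i < length xs" and jj: "j < length xs" "Suc j < length xs" using i j by auto
    from e have "(xs ! i = xs ! j \<and> xs ! Suc i = xs ! Suc j) \<or> (xs ! i = xs ! Suc j \<and> xs ! Suc i = xs ! j)"
      by (auto simp: doubleton_eq_iff)
    thus "i = j"
    proof
      assume "xs ! i = xs ! j \<and> xs ! Suc i = xs ! Suc j"
      thus "i = j" using assms ii jj by (simp add: nth_eq_iff_index_eq)
    next
      assume h: "xs ! i = xs ! Suc j \<and> xs ! Suc i = xs ! j"
      have "i = Suc j" using h assms ii jj nth_eq_iff_index_eq by blast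
      moreover have "Suc i = j" using h assms ii jj nth_eq_iff_index_eq by blast
      ultimately show "i = j" by simp
    qed
  qed
  hence "card (pedges xs) = card {i. Suc i < length xs}" unfolding pedges_def by (rule card_image)
  also have "{i. Suc i < length xs} = {..<length xs - 1}" by auto
  finally show ?thesis by simp
qed

lemma pedges_nbr_disj:
  assumes "u \<in> set xs"
  shows "pedges xs \<inter> nbr n xs u = {}"
proof -
  have "False" if e1: "e \<in> pedges xs" and e2: "e \<in> nbr n xs u" for e
  proof -
    obtain i where i: "Suc i < length xs" "e = {xs ! i, xs ! Suc i}" using e1 unfolding pedges_def by blast
    obtain w where w: "w \<notin> set xs" "e = {u, w}" using e2 unfolding nbr_def by auto
    have "w \<in> e" using w by simp
    hence "w = xs ! i \<or> w = xs ! Suc i" using i by simp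
    thus False using w(1) i(1) nth_mem[of i xs] nth_mem[of "Suc i" xs] by auto
  qed
  thus ?thesis by blast
qed

lemma nbr_nbr_disj:
  assumes "u \<noteq> v" "u \<in> set xs" "v \<in> set xs"
  shows "nbr n xs u \<inter> nbr n xs v = {}"
  using assms unfolding nbr_def by (auto simp: doubleton_eq_iff)

lemma card_Ev_nbr_le_degree:
  assumes "E \<subseteq> all_edges n"
  shows "card (E \<inter> nbr n xs u) \<le> degree E u"
proof -
  have fin: "finite {w. {w, u} \<in> E}"
  proof (rule finite_subset[of _ "{..<n}"])
    show "{w. {w, u} \<in> E} \<subseteq> {..<n}" using assms all_edges_lt by blast
  qed simp
  have "E \<inter> nbr n xs u \<subseteq> (\<lambda>w. {u, w}) ` {w. {w, u} \<in> E}" unfolding nbr_def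
    by (auto simp: insert_commute)
  hence "card (E \<inter> nbr n xs u) \<le> card ((\<lambda>w. {u, w}) ` {w. {w, u} \<in> E})"
    using fin by (intro card_mono) auto
  also have "\<dots> \<le> card {w. {w, u} \<in> E}" by (rule card_image_le[OF fin])
  finally show ?thesis unfolding degree_def .
qed

lemma walk_vertices:
  assumes w: "is_walk E ys" and E: "E \<subseteq> all_edges n" and l: "2 \<le> length ys"
  shows "set ys \<subseteq> {..<n}"
proof
  fix x assume "x \<in> set ys"
  then obtain m where m: "m < length ys" "x = ys ! m" by (auto simp: in_set_conv_nth)
  show "x \<in> {..<n}"
  proof (cases "Suc m < length ys")
    case True
    hence "{ys ! m, ys ! Suc m} \<in> all_edges n" using w E unfolding is_walk_def by auto
    thus ?thesis using m all_edges_lt by auto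
  next
    case False
    hence "m \<ge> 1" using m l by auto
    hence "Suc (m - 1) < length ys" using m by auto
    hence "{ys ! (m - 1), ys ! Suc (m - 1)} \<in> all_edges n" using w E unfolding is_walk_def by auto
    moreover have "Suc (m - 1) = m" using \<open>m \<ge> 1\<close> by simp
    ultimately show ?thesis using m all_edges_lt by auto
  qed
qed

lemma bad_cover:
  fixes T X :: real
  assumes E: "E \<subseteq> all_edges n"
    and bad: "\<exists>u v. u < n \<and> v < n \<and> u \<noteq> v \<and> real (degree E u) < T \<and> real (degree E v) < T \<and> dist_at_most E u v X"
  shows "\<exists>i\<in>Sigma {l. 1 \<le> l \<and> real l \<le> X} (\<lambda>l. {xs. set xs \<subseteq> {..<n} \<and> length xs = Suc l}).
           Ev n T (snd i) E"
proof -
  obtain u v ws where uv: "u \<noteq> v" "real (degree E u) < T" "real (degree E v) < T"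
    and ws: "is_walk E ws" "hd ws = u" "last ws = v" "real (length ws - 1) \<le> X"
    using bad unfolding dist_at_most_def by blast
  obtain ys where ys: "is_walk E ys" "distinct ys" "hd ys = u" "last ys = v" "length ys \<le> length ws"
    using walk_to_path[OF ws(1)] ws(2,3) by blast
  have ne: "ys \<noteq> []" using ys(1) unfolding is_walk_def by simp
  have l2: "2 \<le> length ys"
  proof (rule ccontr)
    assume "\<not> 2 \<le> length ys"
    hence "length ys < 2" by simp
    hence "length ys = Suc 0" using ne by (cases "length ys") auto
    then obtain a where "ys = [a]" using length_Suc_conv[of ys 0] by auto
    thus False using ys uv by simp
  qed
  have sub: "set ys \<subseteq> {..<n}" by (rule walk_vertices[OF ys(1) E l2])
  define l where "l = length ys - 1"
  have lys: "length ys = Suc l" using l2 unfolding l_def by simp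
  have "real l \<le> X" using ws(4) ys(5) unfolding l_def by (smt (verit) diff_le_mono of_nat_mono)
  moreover have "1 \<le> l" using l2 unfolding l_def by simp
  moreover have pe: "pedges ys \<subseteq> E" using ys(1) unfolding is_walk_def pedges_def by auto
  moreover have "real (card (E \<inter> nbr n ys (hd ys))) < T"
    using card_Ev_nbr_le_degree[OF E, of ys u] uv ys(3) by (smt (verit) of_nat_mono)
  moreover have "real (card (E \<inter> nbr n ys (last ys))) < T"
    using card_Ev_nbr_le_degree[OF E, of ys v] uv ys(4) by (smt (verit) of_nat_mono)
  ultimately show ?thesis using ys(2) sub lys unfolding Ev_def
    by (intro bexI[of _ "(l, ys)"]) auto
qed

lemma per_path_bound:
  fixes p t :: real
  assumes p: "0 \<le> p" "p \<le> 1" and xs: "set xs \<subseteq> {..<n}" "length xs = Suc l" "1 \<le> l"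
  shows "(\<Sum>E\<in>{E. E \<subseteq> all_edges n \<and> Ev n t xs E}. p ^ card E * (1 - p) ^ (card (all_edges n) - card E))
      \<le> (1/64) powr (-2*t) * (p ^ l * (1/64 * p + 1 - p) ^ (2 * (n - Suc l)))"
proof (cases "distinct xs")
  case False
  hence S: "{E. E \<subseteq> all_edges n \<and> Ev n t xs E} = {}" unfolding Ev_def by auto
  have "0 \<le> (1/64::real) * p + 1 - p" using p by simp
  hence "0 \<le> (1/64::real) powr (-2*t) * (p ^ l * (1/64 * p + 1 - p) ^ (2 * (n - Suc l)))" using p by simp
  thus ?thesis unfolding S by simp
next
  case True
  have hd: "hd xs \<in> set xs" and lst: "last xs \<in> set xs" using xs by (auto intro!: hd_in_set last_in_set)
  have hl: "hd xs \<noteq> last xs"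
  proof -
    have ne: "xs \<noteq> []" using xs by auto
    have "hd xs = xs ! 0" using ne by (rule hd_conv_nth)
    moreover have "last xs = xs ! l" using xs ne by (subst last_conv_nth) auto
    ultimately have "hd xs = xs ! 0" "last xs = xs ! l" by auto
    thus ?thesis using True xs by (simp add: nth_eq_iff_index_eq)
  qed
  have "(\<Sum>E\<in>{E. E \<subseteq> all_edges n \<and> Ev n t xs E}. p ^ card E * (1 - p) ^ (card (all_edges n) - card E))
      \<le> (1/64) powr (-2*t) * (p ^ card (pedges xs) * (1/64 * p + 1 - p) ^ (card (nbr n xs (hd xs)) + card (nbr n xs (last xs))))"
  proof (rule event_bound[OF finite_all_edges])
    show "pedges xs \<subseteq> all_edges n" by (rule pedges_sub[OF True xs(1)])
    show "nbr n xs (hd xs) \<subseteq> all_edges n" by (rule nbr_sub[OF hd xs(1)])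
    show "nbr n xs (last xs) \<subseteq> all_edges n" by (rule nbr_sub[OF lst xs(1)])
    show "pedges xs \<inter> (nbr n xs (hd xs) \<union> nbr n xs (last xs)) = {}"
      using pedges_nbr_disj[OF hd] pedges_nbr_disj[OF lst] by blast
    show "nbr n xs (hd xs) \<inter> nbr n xs (last xs) = {}" by (rule nbr_nbr_disj[OF hl hd lst])
  qed (use p in \<open>auto simp: Ev_def\<close>)
  also have "card (pedges xs) = l" using card_pedges[OF True] xs by simp
  also have "card (nbr n xs (hd xs)) + card (nbr n xs (last xs)) = 2 * (n - Suc l)"
    using card_nbr[OF True xs(1)] xs by simp
  finally show ?thesis .
qed



lemma gnp_compl:
  "gnp_prob n q (\<lambda>E. \<not> P E) = 1 - gnp_prob n q P"
proof -
  let ?A = "all_edges n"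
  let ?w = "\<lambda>E. q ^ card E * (1 - q) ^ (card ?A - card E)"
  have f: "finite (Pow ?A)" using finite_all_edges by simp
  have "Pow ?A = {E. E \<subseteq> ?A \<and> P E} \<union> {E. E \<subseteq> ?A \<and> \<not> P E}" by auto
  hence "sum ?w (Pow ?A) = sum ?w {E. E \<subseteq> ?A \<and> P E} + sum ?w {E. E \<subseteq> ?A \<and> \<not> P E}"
    using f by (simp add: sum.union_disjoint[symmetric] disjoint_iff)
  moreover have "sum ?w (Pow ?A) = 1" by (rule total_mass[OF finite_all_edges])
  ultimately show ?thesis unfolding gnp_prob_def by simp
qed

lemma finite_Lset: "finite {l::nat. 1 \<le> l \<and> real l \<le> X}"
proof (rule finite_subset[of _ "{..nat \<lceil>X\<rceil>}"])
  show "{l::nat. 1 \<le> l \<and> real l \<le> X} \<subseteq> {..nat \<lceil>X\<rceil>}"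
  proof
    fix l assume "l \<in> {l::nat. 1 \<le> l \<and> real l \<le> X}"
    hence "real l \<le> X" by simp
    hence "real l \<le> of_int \<lceil>X\<rceil>" by (meson le_of_int_ceiling order_trans)
    hence "int l \<le> \<lceil>X\<rceil>" by linarith
    thus "l \<in> {..nat \<lceil>X\<rceil>}" by simp
  qed
qed simp

lemma bad_bound:
  fixes q T X :: real
  assumes q: "0 \<le> q" "q \<le> 1"
  shows "gnp_prob n q (\<lambda>E. \<exists>u v. u < n \<and> v < n \<and> u \<noteq> v \<and> real (degree E u) < T \<and> real (degree E v) < T \<and> dist_at_most E u v X)
    \<le> (\<Sum>l\<in>{l. 1 \<le> l \<and> real l \<le> X}. real n ^ Suc l * ((1/64) powr (-2*T) * (q ^ l * (1/64 * q + 1 - q) ^ (2 * (n - Suc l)))))"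
proof -
  let ?A = "all_edges n"
  let ?w = "\<lambda>E. q ^ card E * (1 - q) ^ (card ?A - card E)"
  let ?L = "{l::nat. 1 \<le> l \<and> real l \<le> X}"
  let ?Ls = "\<lambda>l. {xs. set xs \<subseteq> {..<n} \<and> length xs = Suc l}"
  let ?I = "Sigma ?L ?Ls"
  have fL: "finite ?L" by (rule finite_Lset)
  have fLs: "\<And>l. finite (?Ls l)" by (rule finite_lists_length_eq) simp
  have fI: "finite ?I" using fL fLs by simp
  have "gnp_prob n q (\<lambda>E. \<exists>u v. u < n \<and> v < n \<and> u \<noteq> v \<and> real (degree E u) < T \<and> real (degree E v) < T \<and> dist_at_most E u v X)
     \<le> (\<Sum>i\<in>?I. \<Sum>E\<in>{E. E \<subseteq> ?A \<and> Ev n T (snd i) E}. ?w E)"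
    unfolding gnp_prob_def
    by (rule union_bound[OF finite_all_edges fI]) (use q bad_cover in auto)
  also have "\<dots> = (\<Sum>l\<in>?L. \<Sum>xs\<in>?Ls l. \<Sum>E\<in>{E. E \<subseteq> ?A \<and> Ev n T xs E}. ?w E)"
    by (subst sum.Sigma[OF fL]) (use fLs in \<open>auto simp: split_beta\<close>)
  also have "\<dots> \<le> (\<Sum>l\<in>?L. real n ^ Suc l * ((1/64) powr (-2*T) * (q ^ l * (1/64 * q + 1 - q) ^ (2 * (n - Suc l)))))"
  proof (rule sum_mono)
    fix l assume l: "l \<in> ?L"
    have "(\<Sum>xs\<in>?Ls l. \<Sum>E\<in>{E. E \<subseteq> ?A \<and> Ev n T xs E}. ?w E)
        \<le> of_nat (card (?Ls l)) * ((1/64) powr (-2*T) * (q ^ l * (1/64 * q + 1 - q) ^ (2 * (n - Suc l))))"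
      by (rule sum_bounded_above) (use l q per_path_bound in auto)
    also have "card (?Ls l) = n ^ Suc l" by (subst card_lists_length_eq) auto
    finally show "(\<Sum>xs\<in>?Ls l. \<Sum>E\<in>{E. E \<subseteq> ?A \<and> Ev n T xs E}. ?w E)
        \<le> real n ^ Suc l * ((1/64) powr (-2*T) * (q ^ l * (1/64 * q + 1 - q) ^ (2 * (n - Suc l))))" by simp
  qed
  finally show ?thesis .
qed



lemma ln64_le: "ln (64::real) \<le> 6"
proof -
  have "ln (64::real) = ln (2 ^ 6)" by simp
  also have "\<dots> = 6 * ln 2" by (subst ln_realpow) auto
  finally show ?thesis using ln_2_less_1 by simp
qed

lemma key_bound:
  fixes n k :: nat and L LL LLL lam p X T :: real
  assumes defs: "L = ln (real n)" "LL = ln L" "LLL = ln LL" "lam = L + (real k + 1) * LL - LLL"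
      "p = lam / real n" "X = 3/4 * (L / LL)" "T = L / 100"
    and c1: "1 \<le> L" and c2: "75 \<le> LL" and c3: "(real k + 1) * LL \<le> L"
    and c4: "2 * L \<le> real n" and c5: "2 * L * (L + 1) / real n \<le> 1"
  shows "0 \<le> p" "p \<le> 1"
    "(\<Sum>l\<in>{l. 1 \<le> l \<and> real l \<le> X}. real n ^ Suc l * ((1/64) powr (-2*T) * (p ^ l * (1/64 * p + 1 - p) ^ (2 * (n - Suc l)))))
      \<le> exp 2 * L * real n powr (-8/100)"
proof -
  have npos: "0 < real n" using c1 c4 by simp
  have LLpos: "0 < LL" using c2 by simp
  have LLL0: "0 \<le> LLL" using c2 defs(3) by simp
  have "LLL \<le> LL - 1" using ln_le_minus_one[OF LLpos] defs(3) by simp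
  hence LLLle: "LLL \<le> (real k + 1) * LL" using LLpos by (smt (verit) mult_le_cancel_right1 of_nat_0_le_iff)
  have lam_lo: "L \<le> lam" using LLLle defs(4) by simp
  have lam_hi: "lam \<le> 2 * L" using LLL0 c3 defs(4) by simp
  show p0: "0 \<le> p" using lam_lo c1 npos defs(5) by simp
  have p_hi: "p \<le> 2 * L / real n" using lam_hi npos defs(5) by (simp add: divide_right_mono)
  have "2 * L / real n \<le> 1" using c4 npos by (simp add: divide_le_eq)
  then show p1: "p \<le> 1" using p_hi by linarith
  have pL: "p * (L + 1) \<le> 1"
  proof -
    have "p * (L + 1) \<le> 2 * L / real n * (L + 1)" using p_hi c1 by (intro mult_right_mono) auto
    also have "\<dots> = 2 * L * (L + 1) / real n" by simp
    finally show ?thesis using c5 by simp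
  qed
  have X0: "0 \<le> X" using defs(6) c1 LLpos by simp
  have XLL: "X * LL = 3/4 * L" using defs(6) LLpos by simp
  have Xsmall: "X \<le> L / 100"
  proof -
    have "X = 3/4 * L / LL" using defs(6) by simp
    also have "\<dots> \<le> 3/4 * L / 75" using c1 c2 LLpos by (intro divide_left_mono) auto
    finally show ?thesis by simp
  qed
  have XL: "X \<le> L" using Xsmall c1 by simp
  define G where "G = real n * exp (3/4 * L + L / 100) * exp (12/100 * L) * exp (-(126/64) * (L - 1))"
  have termb: "real n ^ Suc l * ((1/64) powr (-2*T) * (p ^ l * (1/64 * p + 1 - p) ^ (2 * (n - Suc l)))) \<le> G"
    if l: "1 \<le> l" "real l \<le> X" for l
  proof -
    have lam1: "1 \<le> lam" using lam_lo c1 by simp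
    have eq1: "real n ^ Suc l * ((1/64) powr (-2*T) * (p ^ l * (1/64 * p + 1 - p) ^ (2 * (n - Suc l))))
       = real n * (real n * p) ^ l * (1/64) powr (-2*T) * (1/64 * p + 1 - p) ^ (2 * (n - Suc l))"
      by (simp add: power_mult_distrib algebra_simps)
    have np: "real n * p = lam" using defs(5) npos by simp
    have A1: "lam ^ l \<le> exp (3/4 * L + L / 100)"
    proof -
      have "lam ^ l = lam powr real l" using lam1 by (simp add: powr_realpow)
      also have "\<dots> \<le> lam powr X" using l lam1 by (intro powr_mono) auto
      also have "\<dots> \<le> (2 * L) powr X" using X0 lam1 lam_hi by (intro powr_mono2) auto
      also have "\<dots> = exp (X * ln (2 * L))" using c1 by (simp add: powr_def)
      also have "ln (2 * L) = ln 2 + LL" using c1 defs(2) by (simp add: ln_mult)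
      also have "X * (ln 2 + LL) = X * ln 2 + 3/4 * L" using XLL by (simp add: algebra_simps)
      also have "X * ln 2 \<le> L / 100"
      proof -
        have "X * ln 2 \<le> X * 1" using X0 ln_2_less_1 by (intro mult_left_mono) auto
        thus ?thesis using Xsmall by simp
      qed
      hence "exp (X * ln 2 + 3/4 * L) \<le> exp (3/4 * L + L / 100)" by simp
      finally show ?thesis .
    qed
    have A2: "(1/64::real) powr (-2*T) \<le> exp (12/100 * L)"
    proof -
      have e: "(1/64::real) powr (-2*T) = exp (2 * T * ln 64)" by (simp add: powr_def ln_div)
      have "2 * T * ln 64 \<le> 2 * T * 6" using ln64_le defs(7) c1 by (intro mult_left_mono) auto
      moreover have "2 * T * 6 = 12/100 * L" using defs(7) by simp
      ultimately have "2 * T * ln 64 \<le> 12/100 * L" by linarith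
      hence "exp (2 * T * ln 64) \<le> exp (12/100 * L)" by simp
      thus ?thesis using e by simp
    qed
    define m where "m = n - Suc l"
    have lLn: "real l + 1 \<le> real n" using l XL c4 c1 by simp
    hence mreal: "real m = real n - real l - 1" unfolding m_def by (simp add: of_nat_diff)
    have b0: "0 \<le> 1/64 * p + 1 - p" using p1 by simp
    have A3: "(1/64 * p + 1 - p) ^ (2 * m) \<le> exp (-(126/64) * (L - 1))"
    proof -
      have "(1/64 * p + 1 - p) ^ (2 * m) \<le> exp (-(63/64) * p) ^ (2 * m)"
        using b0 exp_ge_add_one_self[of "-(63/64) * p"] by (intro power_mono) auto
      also have "\<dots> = exp (real (2 * m) * (-(63/64) * p))" by (rule exp_of_nat_mult[symmetric])
      also have "real (2 * m) * (-(63/64) * p) \<le> -(126/64) * (L - 1)"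
      proof -
        have "p * real m = p * (real n - real l - 1)" using mreal by simp
        also have "\<dots> = p * real n - p * (real l + 1)" by (simp add: algebra_simps)
        also have "p * real n = lam" using np by (simp add: mult.commute)
        finally have "p * real m = lam - p * (real l + 1)" .
        moreover have "p * (real l + 1) \<le> p * (L + 1)" using p0 l XL by (intro mult_left_mono) auto
        ultimately have "L - 1 \<le> p * real m" using pL lam_lo by simp
        thus ?thesis by simp
      qed
      hence "exp (real (2 * m) * (-(63/64) * p)) \<le> exp (-(126/64) * (L - 1))" by simp
      finally show ?thesis .
    qed
    have "real n * (real n * p) ^ l * (1/64) powr (-2*T) * (1/64 * p + 1 - p) ^ (2 * m) \<le> G"
      unfolding G_def np using A1 A2 A3 npos b0 lam1
      by (intro mult_mono) (auto intro: mult_nonneg_nonneg)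
    thus ?thesis using eq1 unfolding m_def by linarith
  qed
  have G0: "0 \<le> G" unfolding G_def using npos by simp
  have "(\<Sum>l\<in>{l. 1 \<le> l \<and> real l \<le> X}. real n ^ Suc l * ((1/64) powr (-2*T) * (p ^ l * (1/64 * p + 1 - p) ^ (2 * (n - Suc l)))))
      \<le> of_nat (card {l. 1 \<le> l \<and> real l \<le> X}) * G"
    by (rule sum_bounded_above) (use termb in auto)
  also have "real (card {l. 1 \<le> l \<and> real l \<le> X}) \<le> L"
  proof -
    have "{l. 1 \<le> l \<and> real l \<le> X} \<subseteq> {1..nat \<lfloor>X\<rfloor>}"
    proof
      fix l assume "l \<in> {l. 1 \<le> l \<and> real l \<le> X}"
      hence "1 \<le> l" "real l \<le> X" by auto
      hence "int l \<le> \<lfloor>X\<rfloor>" by (simp add: le_floor_iff)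
      thus "l \<in> {1..nat \<lfloor>X\<rfloor>}" using \<open>1 \<le> l\<close> by simp
    qed
    hence "card {l. 1 \<le> l \<and> real l \<le> X} \<le> card {1..nat \<lfloor>X\<rfloor>}" by (intro card_mono) auto
    hence "real (card {l. 1 \<le> l \<and> real l \<le> X}) \<le> real (nat \<lfloor>X\<rfloor>)" by simp
    also have "\<dots> \<le> X" using X0 by linarith
    finally show ?thesis using XL by simp
  qed
  hence "real (card {l. 1 \<le> l \<and> real l \<le> X}) * G \<le> L * G" using G0 by (intro mult_right_mono)
  also have "L * G \<le> exp 2 * L * real n powr (-8/100)"
  proof -
    have n_exp: "real n = exp L" using npos defs(1) by simp
    have "G = exp (L + (3/4 * L + L / 100) + 12/100 * L + (-(126/64) * (L - 1)))"
      unfolding G_def n_exp exp_add[symmetric] by (rule arg_cong[where f=exp]) simp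
    also have "\<dots> \<le> exp (2 + (-8/100) * L)" using c1 by (subst exp_le_cancel_iff) (simp add: field_simps)
    also have "\<dots> = exp 2 * exp ((-8/100) * L)" by (rule exp_add)
    also have "exp ((-8/100) * L) = real n powr (-8/100)" using npos defs(1) by (simp add: powr_def)
    finally have "G \<le> exp 2 * real n powr (-8/100)" .
    thus ?thesis using c1 by (simp add: mult_left_mono mult.assoc)
  qed
  finally show "(\<Sum>l\<in>{l. 1 \<le> l \<and> real l \<le> X}. real n ^ Suc l * ((1/64) powr (-2*T) * (p ^ l * (1/64 * p + 1 - p) ^ (2 * (n - Suc l)))))
      \<le> exp 2 * L * real n powr (-8/100)" .
qed



lemma gnp_nonneg: "0 \<le> q \<Longrightarrow> q \<le> 1 \<Longrightarrow> 0 \<le> gnp_prob n q P"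
  unfolding gnp_prob_def by (intro sum_nonneg) auto

theorem lemma4:
  fixes k :: nat and p D :: "nat \<Rightarrow> real"
  assumes "k \<ge> 1"
  defines "p \<equiv> (\<lambda>n. (ln (real n) + (real k + 1) * ln (ln (real n)) - ln (ln (ln (real n)))) / real n)"
    and "D \<equiv> (\<lambda>n. ln (real n) / ln (ln (real n)))"
  shows "(\<lambda>n. gnp_prob n (p n)
            (\<lambda>E. \<not> (\<exists>u v. u < n \<and> v < n \<and> u \<noteq> v \<and>
                   real (degree E u) < ln (real n) / 100 \<and>
                   real (degree E v) < ln (real n) / 100 \<and>
                   dist_at_most E u v (3 / 4 * D n))))
         \<longlonglongrightarrow> 1"
proof -
  define mu where "mu = (\<lambda>n. gnp_prob n (p n)
            (\<lambda>E. (\<exists>u v. u < n \<and> v < n \<and> u \<noteq> v \<and>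
                   real (degree E u) < ln (real n) / 100 \<and>
                   real (degree E v) < ln (real n) / 100 \<and>
                   dist_at_most E u v (3 / 4 * D n))))"
  have e1: "eventually (\<lambda>n::nat. 1 \<le> ln (real n)) sequentially" by real_asymp
  have e2: "eventually (\<lambda>n::nat. 75 \<le> ln (ln (real n))) sequentially" by real_asymp
  have e3: "eventually (\<lambda>n::nat. 2 * ln (real n) \<le> real n) sequentially" by real_asymp
  have e4: "eventually (\<lambda>n::nat. 2 * ln (real n) * (ln (real n) + 1) / real n \<le> 1) sequentially" by real_asymp
  have lim0: "(\<lambda>n::nat. ln (ln (real n)) / ln (real n)) \<longlonglongrightarrow> 0" by real_asymp
  have e5: "eventually (\<lambda>n::nat. ln (ln (real n)) / ln (real n) < 1 / (real k + 1)) sequentially"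
    by (rule order_tendstoD(2)[OF lim0]) simp
  have bnd: "eventually (\<lambda>n. 0 \<le> mu n \<and> mu n \<le> exp 2 * ln (real n) * real n powr (-8/100)) sequentially"
    using e1 e2 e3 e4 e5
  proof eventually_elim
    case (elim n)
    have c1: "1 \<le> ln (real n)" and c2: "75 \<le> ln (ln (real n))" using elim by auto
    have c3: "(real k + 1) * ln (ln (real n)) \<le> ln (real n)"
    proof -
      have "ln (ln (real n)) < ln (real n) / (real k + 1)"
        using elim(5) c1 by (simp add: divide_less_eq field_simps)
      thus ?thesis by (simp add: field_simps)
    qed
    note kb = key_bound[where n = n and k = k and L = "ln (real n)" and LL = "ln (ln (real n))"
        and LLL = "ln (ln (ln (real n)))"
        and lam = "ln (real n) + (real k + 1) * ln (ln (real n)) - ln (ln (ln (real n)))"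
        and p = "p n" and X = "3/4 * D n" and T = "ln (real n) / 100",
        OF refl refl refl refl _ _ refl c1 c2 c3 elim(3) elim(4)]
    have pn: "p n = (ln (real n) + (real k + 1) * ln (ln (real n)) - ln (ln (ln (real n)))) / real n"
      unfolding p_def by simp
    have Dn: "3/4 * D n = 3/4 * (ln (real n) / ln (ln (real n)))" unfolding D_def by simp
    note kb' = kb[OF pn Dn]
    have "mu n \<le> (\<Sum>l\<in>{l. 1 \<le> l \<and> real l \<le> 3/4 * D n}. real n ^ Suc l * ((1/64) powr (-2*(ln (real n) / 100)) * (p n ^ l * (1/64 * p n + 1 - p n) ^ (2 * (n - Suc l)))))"
      unfolding mu_def by (rule bad_bound[OF kb'(1) kb'(2)])
    also have "\<dots> \<le> exp 2 * ln (real n) * real n powr (-8/100)" by (rule kb'(3))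
    finally show ?case using gnp_nonneg[OF kb'(1) kb'(2)] unfolding mu_def by simp
  qed
  have h0: "(\<lambda>n::nat. exp 2 * ln (real n) * real n powr (-8/100)) \<longlonglongrightarrow> 0" by real_asymp
  have "mu \<longlonglongrightarrow> 0"
  proof (rule tendsto_sandwich[OF _ _ tendsto_const h0])
    show "eventually (\<lambda>n. 0 \<le> mu n) sequentially" using bnd by (rule eventually_mono) simp
    show "eventually (\<lambda>n. mu n \<le> exp 2 * ln (real n) * real n powr (-8/100)) sequentially"
      using bnd by (rule eventually_mono) simp
  qed
  hence "(\<lambda>n. 1 - mu n) \<longlonglongrightarrow> 1 - 0" by (intro tendsto_diff tendsto_const)
  moreover have "\<And>n. gnp_prob n (p n)
            (\<lambda>E. \<not> (\<exists>u v. u < n \<and> v < n \<and> u \<noteq> v \<and>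
                   real (degree E u) < ln (real n) / 100 \<and>
                   real (degree E v) < ln (real n) / 100 \<and>
                   dist_at_most E u v (3 / 4 * D n))) = 1 - mu n"
    unfolding mu_def by (rule gnp_compl)
  ultimately show ?thesis by simp
qed

end
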